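(* Let $(\delta_n)$ be a positive sequence with $\log(\delta_n)/\log n\to0$, and let $\beta=\beta_n\ge0$ with $n\log(n)\beta_n\to0$. Set $a_n=\delta_n\sqrt{2\log n}$ and $b_n=\sqrt{2\log n}-\frac{\log\log n+2\log\delta_n+\log(4\pi)}{2\sqrt{2\log n}}$. Fix $x\in\mathbb{R}$. Then $$n\beta\;\mathbb{E}_{P_{n,\beta}}\Big|\log\Big|1+\frac{x}{a_nb_n}-\frac{\lambda_1}{b_n}\Big|\Big|\xrightarrow[n\to\infty]{}0.$$
   Context: $P_{n,\beta}$ denotes the law on $\mathbb{R}^n$ of $(\lambda_1,\dots,\lambda_n)$ with density $\frac{1}{Z_{n,\beta}}\exp(-\frac12\sum_{i=1}^n\lambda_i^2)\prod_{1\le i<j\le n}|\lambda_i-\lambda_j|^\beta$ with respect to Lebesgue measure, $Z_{n,\beta}$ being the normalizing constant. *)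

theory Defs
  imports "HOL-Analysis.Analysis"
begin

text \<open>Points of R^n are represented as functions nat => real on the index set {..<n}
  (coordinates lambda_1..lambda_n are the values at 0..n-1), with the product
  Lebesgue measure PiM {..<n} (\<lambda>_. lborel).\<close>

definition gauss_space :: "nat \<Rightarrow> (nat \<Rightarrow> real) measure" where
  "gauss_space n = PiM {..<n} (\<lambda>_. lborel)"

definition beta_dens :: "nat \<Rightarrow> real \<Rightarrow> (nat \<Rightarrow> real) \<Rightarrow> real" where
  "beta_dens n \<beta> l =
     exp (- (1/2) * (\<Sum>i<n. (l i)\<^sup>2)) *
     (\<Prod>(i,j)\<in>{(i,j). i < j \<and> j < n}. \<bar>l i - l j\<bar> powr \<beta>)"

definition beta_Z :: "nat \<Rightarrow> real \<Rightarrow> ennreal" where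
  "beta_Z n \<beta> = (\<integral>\<^sup>+ l. ennreal (beta_dens n \<beta> l) \<partial>gauss_space n)"

definition beta_expect :: "nat \<Rightarrow> real \<Rightarrow> ((nat \<Rightarrow> real) \<Rightarrow> real) \<Rightarrow> ennreal" where
  "beta_expect n \<beta> g =
     (\<integral>\<^sup>+ l. ennreal (g l * beta_dens n \<beta> l) \<partial>gauss_space n) / beta_Z n \<beta>"

end

theory Submission
  imports Defs "HOL-Probability.Probability" "HOL-Real_Asymp.Real_Asymp"
begin

lemma phi_moment: "(\<integral>\<^sup>+y. ennreal (std_normal_density y * (1 + \<bar>y\<bar>)^2) \<partial>lborel) \<le> 4"
proof -
  have i0: "has_bochner_integral lborel (\<lambda>x. std_normal_density x) 1"
    using std_normal_moment_even[of 0] by simp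
  have i1: "has_bochner_integral lborel (\<lambda>x. std_normal_density x * x^2) 1"
    using std_normal_moment_even[of 1] by (simp add: numeral_2_eq_2)
  have i2: "has_bochner_integral lborel (\<lambda>x. 2 * std_normal_density x + 2 * (std_normal_density x * x^2)) 4"
    using has_bochner_integral_add[OF has_bochner_integral_mult_right[OF i0, of 2] has_bochner_integral_mult_right[OF i1, of 2]]
    by simp
  have "(\<integral>\<^sup>+y. ennreal (std_normal_density y * (1 + \<bar>y\<bar>)^2) \<partial>lborel)
     \<le> (\<integral>\<^sup>+y. ennreal (2 * std_normal_density y + 2 * (std_normal_density y * y^2)) \<partial>lborel)"
  proof (intro nn_integral_mono ennreal_leI)
    fix y :: real
    have "(1 + \<bar>y\<bar>)^2 \<le> 2 + 2 * y^2"
    proof -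
      have h: "0 \<le> (\<bar>y\<bar> - 1)^2" by simp
      then show ?thesis by (simp add: power2_eq_square algebra_simps abs_mult_self_eq)
    qed
    then have "std_normal_density y * (1 + \<bar>y\<bar>)^2 \<le> std_normal_density y * (2 + 2 * y^2)"
      by (intro mult_left_mono) auto
    then show "std_normal_density y * (1 + \<bar>y\<bar>)^2 \<le> 2 * std_normal_density y + 2 * (std_normal_density y * y^2)"
      by (simp add: algebra_simps)
  qed
  also have "\<dots> = ennreal 4"
    using i2 by (subst nn_integral_eq_integral) (auto simp: has_bochner_integral_iff)
  finally show ?thesis by simp
qed

lemma sqrt_kernel_half: "(\<integral>\<^sup>+x. ennreal (indicator {0..1} x * x powr (-1/2)) \<partial>lborel) = 2"
proof -
  have "((\<lambda>x::real. x powr (-1/2)) has_integral (1 powr ((-1/2)+1) / ((-1/2)+1))) {0..1}"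
    by (rule has_integral_powr_from_0) auto
  then have "((\<lambda>x::real. x powr (-1/2)) has_integral 2) {0..1}" by simp
  from nn_integral_has_integral_lebesgue[OF _ this] show ?thesis by simp
qed

lemma powr_mhalf: "0 \<le> (x::real) \<Longrightarrow> x powr (-1/2) = 1 / sqrt x"
proof -
  assume "0 \<le> x"
  have "x powr (-1/2) = x powr (-(1/2))" by simp
  also have "\<dots> = 1 / x powr (1/2)" by (rule powr_minus_divide)
  also have "\<dots> = 1 / sqrt x" using \<open>0 \<le> x\<close> by (simp add: powr_half_sqrt)
  finally show ?thesis .
qed

lemma powr_mhalf': "0 \<le> (x::real) \<Longrightarrow> x powr (-(1/2)) = 1 / sqrt x"
  using powr_mhalf by simp

lemma kernel_int: "(\<integral>\<^sup>+y. ennreal (indicator {v-1<..<v+1} y * (1 / sqrt \<bar>y - v\<bar>)) \<partial>lborel) \<le> 4"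
proof -
  define g where "g x = indicator {0..1} x * x powr (-1/2)" for x :: real
  have gm[measurable]: "g \<in> borel_measurable borel" unfolding g_def by measurable
  have g2: "(\<integral>\<^sup>+x. ennreal (g x) \<partial>lborel) = 2" unfolding g_def by (rule sqrt_kernel_half)
  have a1: "(\<integral>\<^sup>+x. ennreal (g x) \<partial>lborel) = (\<integral>\<^sup>+y. ennreal (g (-v + y)) \<partial>lborel)"
    using nn_integral_real_affine[of "\<lambda>x. ennreal (g x)" 1 "-v"] by simp
  have a2: "(\<integral>\<^sup>+x. ennreal (g x) \<partial>lborel) = (\<integral>\<^sup>+y. ennreal (g (v - y)) \<partial>lborel)"
    using nn_integral_real_affine[of "\<lambda>x. ennreal (g x)" "-1" "v"] by simp
  have "(\<integral>\<^sup>+y. ennreal (indicator {v-1<..<v+1} y * (1 / sqrt \<bar>y - v\<bar>)) \<partial>lborel)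
      \<le> (\<integral>\<^sup>+y. ennreal (g (-v + y)) + ennreal (g (v - y)) \<partial>lborel)"
  proof (intro nn_integral_mono)
    fix y :: real
    have gn: "0 \<le> g x" for x unfolding g_def by (auto simp: indicator_def)
    have "indicator {v-1<..<v+1} y * (1 / sqrt \<bar>y - v\<bar>) \<le> g (-v + y) + g (v - y)"
    proof (cases "y \<ge> v")
      case True
      then show ?thesis using gn[of "v-y"]
        by (auto simp: g_def indicator_def powr_mhalf powr_mhalf')
    next
      case False
      then show ?thesis using gn[of "-v+y"]
        by (auto simp: g_def indicator_def powr_mhalf powr_mhalf')
    qed
    then show "ennreal (indicator {v-1<..<v+1} y * (1 / sqrt \<bar>y - v\<bar>)) \<le> ennreal (g (-v + y)) + ennreal (g (v - y))"
      using gn by (simp add: ennreal_plus[symmetric] del: ennreal_plus)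
  qed
  also have "\<dots> = (\<integral>\<^sup>+y. ennreal (g (-v + y)) \<partial>lborel) + (\<integral>\<^sup>+y. ennreal (g (v - y)) \<partial>lborel)"
    by (rule nn_integral_add) auto
  also have "\<dots> = 4" using a1 a2 g2 by simp
  finally show ?thesis .
qed

lemma sqrt_le_self': "1 \<le> (z::real) \<Longrightarrow> sqrt z \<le> z"
proof -
  assume z: "1 \<le> z"
  have "z \<le> z^2" using z by (simp add: power2_eq_square)
  then have "sqrt z \<le> sqrt (z^2)" by (rule real_sqrt_le_mono)
  also have "\<dots> = z" using z by simp
  finally show ?thesis .
qed

lemma aux_sq: "1 \<le> (z::real) \<Longrightarrow> 0 \<le> w \<Longrightarrow> z * w \<le> z^2 * w"
  by (intro mult_right_mono) (simp_all add: power2_eq_square)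

lemma aux_le: "0 \<le> (z::real) \<Longrightarrow> 1 \<le> w \<Longrightarrow> z \<le> z * w"
  using mult_left_mono[of 1 w z] by simp

lemma gauss_bound: "2 * std_normal_density y * (1 + \<bar>y\<bar>)^2 \<le> 3"
proof -
  have e1: "exp (y^2/4) \<ge> 1 + y^2/4" by (rule exp_ge_add_one_self)
  have "exp (y^2/2) = exp (y^2/4)^2" by (simp add: exp_double[symmetric] power2_eq_square exp_add[symmetric])
  also have "\<dots> \<ge> (1 + y^2/4)^2" using e1 by (intro power_mono) auto
  finally have e2: "(1 + y^2/4)^2 \<le> exp (y^2/2)" .
  have p: "(1 + \<bar>y\<bar>)^2 \<le> 3 * (1 + y^2/4)^2"
  proof -
    define a where "a = \<bar>y\<bar>"
    have ya: "a^2 = y^2" unfolding a_def by simp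
    have eq: "3*(1+a^2/4)^2 - (1+a)^2 = (a-2)^2/2 + 3*a^4/16" by (simp add: field_simps power2_eq_square power4_eq_xxxx)
    have nn: "0 \<le> (a-2)^2/2 + 3*a^4/16" by simp
    have h: "(1+a)^2 \<le> 3*(1+a^2/4)^2" using eq nn by linarith
    show ?thesis using h[unfolded ya, unfolded a_def] .
  qed
  have s: "sqrt (2*pi) \<ge> 2"
    using pi_gt3 by (simp add: real_le_rsqrt)
  have "2 * std_normal_density y * (1 + \<bar>y\<bar>)^2 = (2 / sqrt (2*pi)) * ((1 + \<bar>y\<bar>)^2 / exp (y^2/2))"
    by (simp add: std_normal_density_def exp_minus field_simps)
  also have "\<dots> \<le> 1 * 3"
  proof (rule mult_mono)
    show "2 / sqrt (2*pi) \<le> 1" using s by simp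
    show "(1 + \<bar>y\<bar>)^2 / exp (y^2/2) \<le> 3"
      using p e2 by (simp add: divide_le_eq) 
  qed auto
  finally show ?thesis by simp
qed

lemma kernel_bound: "(\<integral>\<^sup>+y. ennreal (std_normal_density y * (1 + \<bar>y\<bar>) * (sqrt (1 + \<bar>v\<bar>) / sqrt \<bar>y - v\<bar>)) \<partial>lborel) \<le> 20"
proof -
  let ?k = "\<lambda>y. indicator {v-1<..<v+1} y * (1 / sqrt \<bar>y - v\<bar>)"
  have "(\<integral>\<^sup>+y. ennreal (std_normal_density y * (1 + \<bar>y\<bar>) * (sqrt (1 + \<bar>v\<bar>) / sqrt \<bar>y - v\<bar>)) \<partial>lborel)
      \<le> (\<integral>\<^sup>+y. 2 * ennreal (std_normal_density y * (1 + \<bar>y\<bar>)^2) + 3 * ennreal (?k y) \<partial>lborel)"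
  proof (intro nn_integral_mono)
    fix y :: real
    have phi: "0 \<le> std_normal_density y" by simp
    have gb: "2 * std_normal_density y * (1 + \<bar>y\<bar>)^2 \<le> 3" by (rule gauss_bound)
    have main: "std_normal_density y * (1 + \<bar>y\<bar>) * (sqrt (1 + \<bar>v\<bar>) / sqrt \<bar>y - v\<bar>) \<le> 2 * (std_normal_density y * (1 + \<bar>y\<bar>)^2) + 3 * ?k y"
    proof (cases "\<bar>y - v\<bar> < 1")
      case True
      have s1: "sqrt (1 + \<bar>v\<bar>) \<le> 2 * (1 + \<bar>y\<bar>)"
      proof -
        have "sqrt (1 + \<bar>v\<bar>) \<le> 1 + \<bar>v\<bar>" by (rule sqrt_le_self') auto
        also have "\<dots> \<le> 2 * (1 + \<bar>y\<bar>)" using True abs_triangle_ineq[of y "v-y"] by (simp add: abs_minus_commute)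
        finally show ?thesis .
      qed
      have "std_normal_density y * (1 + \<bar>y\<bar>) * (sqrt (1 + \<bar>v\<bar>) / sqrt \<bar>y - v\<bar>)
          = (std_normal_density y * (1 + \<bar>y\<bar>) * sqrt (1 + \<bar>v\<bar>)) * (1 / sqrt \<bar>y - v\<bar>)" by simp
      also have "\<dots> \<le> 3 * (1 / sqrt \<bar>y - v\<bar>)"
      proof (rule mult_right_mono)
        have "std_normal_density y * (1 + \<bar>y\<bar>) * sqrt (1 + \<bar>v\<bar>) \<le> std_normal_density y * (1 + \<bar>y\<bar>) * (2 * (1 + \<bar>y\<bar>))"
          using s1 phi by (intro mult_left_mono) auto
        moreover have "std_normal_density y * (1 + \<bar>y\<bar>) * (2 * (1 + \<bar>y\<bar>)) = 2 * std_normal_density y * (1 + \<bar>y\<bar>)^2"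
          by (simp add: power2_eq_square)
        ultimately show "std_normal_density y * (1 + \<bar>y\<bar>) * sqrt (1 + \<bar>v\<bar>) \<le> 3" using gb
          by linarith
      qed auto
      also have "\<dots> = 3 * ?k y" using True by (simp add: indicator_def abs_less_iff)
      also have "\<dots> \<le> 2 * (std_normal_density y * (1 + \<bar>y\<bar>)^2) + 3 * ?k y" using phi by simp
      finally show ?thesis .
    next
      case False
      have r: "sqrt (1 + \<bar>v\<bar>) / sqrt \<bar>y - v\<bar> \<le> 2 * (1 + \<bar>y\<bar>)"
      proof -
        have sp: "sqrt \<bar>y - v\<bar> > 0" using False by simp
        have "1 + \<bar>v\<bar> \<le> (2 * (1 + \<bar>y\<bar>))^2 * \<bar>y - v\<bar>"
        proof -
          obtain X where X: "X = (1 + \<bar>y\<bar>) * \<bar>y - v\<bar>" by blast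
          have h1: "1 + \<bar>y\<bar> \<le> X" unfolding X by (rule aux_le) (use False in auto)
          have h2: "\<bar>v\<bar> \<le> \<bar>y\<bar> + \<bar>y - v\<bar>" using abs_triangle_ineq[of y "v-y"] by (simp add: abs_minus_commute)
          have h3: "\<bar>y - v\<bar> \<le> X" unfolding X by (simp add: algebra_simps)
          have h4: "2 * (1 + \<bar>y\<bar>) * \<bar>y - v\<bar> = 2 * X" unfolding X by simp
          have "1 + \<bar>v\<bar> \<le> 2 * (1 + \<bar>y\<bar>) * \<bar>y - v\<bar>" unfolding h4 using h1 h2 h3 by linarith
          also have "\<dots> \<le> (2 * (1 + \<bar>y\<bar>))^2 * \<bar>y - v\<bar>"
            by (rule aux_sq) auto
          finally show ?thesis .
        qed
        then have "sqrt (1 + \<bar>v\<bar>) \<le> sqrt ((2 * (1 + \<bar>y\<bar>))^2 * \<bar>y - v\<bar>)" by simp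
        also have "\<dots> = 2 * (1 + \<bar>y\<bar>) * sqrt \<bar>y - v\<bar>" by (simp add: real_sqrt_mult)
        finally show ?thesis using sp by (simp add: divide_le_eq)
      qed
      have "std_normal_density y * (1 + \<bar>y\<bar>) * (sqrt (1 + \<bar>v\<bar>) / sqrt \<bar>y - v\<bar>) \<le> std_normal_density y * (1 + \<bar>y\<bar>) * (2 * (1 + \<bar>y\<bar>))"
        using r phi by (intro mult_left_mono) auto
      also have "\<dots> = 2 * (std_normal_density y * (1 + \<bar>y\<bar>)^2)" by (simp add: power2_eq_square)
      also have "\<dots> \<le> 2 * (std_normal_density y * (1 + \<bar>y\<bar>)^2) + 3 * ?k y" by (simp add: indicator_def)
      finally show ?thesis .
    qed
    have kn: "0 \<le> ?k y" by (simp add: indicator_def)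
    show "ennreal (std_normal_density y * (1 + \<bar>y\<bar>) * (sqrt (1 + \<bar>v\<bar>) / sqrt \<bar>y - v\<bar>)) \<le> 2 * ennreal (std_normal_density y * (1 + \<bar>y\<bar>)^2) + 3 * ennreal (?k y)"
    proof -
      have A: "0 \<le> std_normal_density y * (1 + \<bar>y\<bar>)^2" using phi by simp
      have "ennreal (std_normal_density y * (1 + \<bar>y\<bar>) * (sqrt (1 + \<bar>v\<bar>) / sqrt \<bar>y - v\<bar>))
          \<le> ennreal (2 * (std_normal_density y * (1 + \<bar>y\<bar>)^2) + 3 * ?k y)" by (rule ennreal_leI[OF main])
      also have "\<dots> = ennreal (2 * (std_normal_density y * (1 + \<bar>y\<bar>)^2)) + ennreal (3 * ?k y)"
        using A kn by (intro ennreal_plus) auto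
      also have "\<dots> = 2 * ennreal (std_normal_density y * (1 + \<bar>y\<bar>)^2) + 3 * ennreal (?k y)"
      proof -
        have gen: "ennreal (2 * p) + ennreal (3 * q) = 2 * ennreal p + 3 * ennreal q" for p q :: real
          by (simp add: ennreal_mult')
        show ?thesis by (rule gen)
      qed
      finally show ?thesis .
    qed
  qed
  also have "\<dots> = 2 * (\<integral>\<^sup>+y. ennreal (std_normal_density y * (1 + \<bar>y\<bar>)^2) \<partial>lborel) + 3 * (\<integral>\<^sup>+y. ennreal (?k y) \<partial>lborel)"
    by (subst nn_integral_add) (auto simp: nn_integral_cmult)
  also have "\<dots> \<le> 2 * 4 + 3 * 4"
    by (intro add_mono mult_left_mono phi_moment kernel_int) auto
  finally show ?thesis by simp
qed

lemma phi_int1: "(\<integral>\<^sup>+y. ennreal (std_normal_density y) \<partial>lborel) = 1"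
proof -
  have i0: "has_bochner_integral lborel (\<lambda>x. std_normal_density x) 1"
    using std_normal_moment_even[of 0] by simp
  then show ?thesis by (subst nn_integral_eq_integral) (auto simp: has_bochner_integral_iff)
qed

lemma ln_ge_sqrt: "0 < u \<Longrightarrow> ln u \<ge> - 2 / sqrt u"
proof -
  assume u: "0 < u"
  have "ln (1 / sqrt u) \<le> 1 / sqrt u - 1" using u by (intro ln_le_minus_one) auto
  moreover have "ln (1 / sqrt u) = - ln u / 2" using u by (simp add: ln_div ln_sqrt)
  ultimately show ?thesis by simp
qed

lemma prod_ineq:
  fixes c :: "nat \<Rightarrow> real" and J :: "nat set"
  assumes J: "finite J" and b: "0 \<le> \<beta>" and y: "\<And>j. j \<in> J \<Longrightarrow> y \<noteq> c j"
  shows "1 \<le> (\<Prod>j\<in>J. (\<bar>y - c j\<bar> / (1 + \<bar>c j\<bar>)) powr \<beta>) + (\<Sum>j\<in>J. 2 * \<beta> * (sqrt (1 + \<bar>c j\<bar>) / sqrt \<bar>y - c j\<bar>))"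
proof -
  define u where "u j = \<bar>y - c j\<bar> / (1 + \<bar>c j\<bar>)" for j
  have up: "0 < u j" if "j \<in> J" for j using y[OF that] unfolding u_def by (simp add: add_pos_nonneg)
  have "(\<Prod>j\<in>J. u j powr \<beta>) = (\<Prod>j\<in>J. exp (\<beta> * ln (u j)))"
  proof (intro prod.cong refl)
    fix j assume "j \<in> J"
    then have "u j \<noteq> 0" using up[of j] by simp
    then show "u j powr \<beta> = exp (\<beta> * ln (u j))" by (simp add: powr_def mult.commute)
  qed
  also have "\<dots> = exp (\<Sum>j\<in>J. \<beta> * ln (u j))" using J by (simp add: exp_sum)
  also have "\<dots> \<ge> 1 + (\<Sum>j\<in>J. \<beta> * ln (u j))" by (rule exp_ge_add_one_self)
  finally have e: "1 + (\<Sum>j\<in>J. \<beta> * ln (u j)) \<le> (\<Prod>j\<in>J. u j powr \<beta>)" .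
  have "(\<Sum>j\<in>J. \<beta> * ln (u j)) \<ge> (\<Sum>j\<in>J. - (2 * \<beta> * (sqrt (1 + \<bar>c j\<bar>) / sqrt \<bar>y - c j\<bar>)))"
  proof (intro sum_mono)
    fix j assume j: "j \<in> J"
    have "ln (u j) \<ge> - 2 / sqrt (u j)" using up[OF j] by (rule ln_ge_sqrt)
    moreover have "2 / sqrt (u j) = 2 * (sqrt (1 + \<bar>c j\<bar>) / sqrt \<bar>y - c j\<bar>)"
      unfolding u_def by (simp add: real_sqrt_divide)
    ultimately have lj: "ln (u j) \<ge> - (2 * (sqrt (1 + \<bar>c j\<bar>) / sqrt \<bar>y - c j\<bar>))" by simp
    then show "- (2 * \<beta> * (sqrt (1 + \<bar>c j\<bar>) / sqrt \<bar>y - c j\<bar>)) \<le> \<beta> * ln (u j)"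
      using mult_left_mono[OF lj b] by (simp add: algebra_simps)
  qed
  then have "(\<Sum>j\<in>J. \<beta> * ln (u j)) \<ge> - (\<Sum>j\<in>J. 2 * \<beta> * (sqrt (1 + \<bar>c j\<bar>) / sqrt \<bar>y - c j\<bar>))"
    by (simp add: sum_negf)
  with e show ?thesis unfolding u_def by linarith
qed

lemma ennreal_half_aux: "1 \<le> A + ennreal (1/2) \<Longrightarrow> ennreal (1/2) \<le> A"
proof (cases A)
  case (real a)
  assume h: "1 \<le> A + ennreal (1/2)"
  have a0: "0 \<le> a" using real by simp
  have e: "ennreal (a + 1/2) = ennreal a + ennreal (1/2)" by (rule ennreal_plus[OF a0]) simp
  have "ennreal 1 \<le> ennreal (a + 1/2)" using h unfolding real e by simp
  then have "1 \<le> a + 1/2" using a0 by (subst (asm) ennreal_le_iff) auto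
  then show ?thesis unfolding real by (intro ennreal_leI) linarith
qed simp

lemma AE_avoid:
  fixes c :: "nat \<Rightarrow> real"
  assumes "finite J"
  shows "AE y in lborel. \<forall>j\<in>J. y \<noteq> c j"
proof -
  have "AE y in lborel. y \<notin> c ` J"
    by (rule AE_not_in) (rule finite_imp_null_set_lborel, use assms in simp)
  then show ?thesis by eventually_elim auto
qed

lemma Zlow:
  fixes c :: "nat \<Rightarrow> real" and J :: "nat set" and \<beta> :: real
  assumes J: "finite J" and b: "0 \<le> \<beta>" and small: "40 * \<beta> * card J \<le> 1/2"
  shows "ennreal ((\<Prod>j\<in>J. (1 + \<bar>c j\<bar>) powr \<beta>) / 2)
     \<le> (\<integral>\<^sup>+y. ennreal (std_normal_density y * (\<Prod>j\<in>J. \<bar>y - c j\<bar> powr \<beta>)) \<partial>lborel)"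
proof -
  define P where "P = (\<Prod>j\<in>J. (1 + \<bar>c j\<bar>) powr \<beta>)"
  define U where "U y = (\<Prod>j\<in>J. (\<bar>y - c j\<bar> / (1 + \<bar>c j\<bar>)) powr \<beta>)" for y
  define k where "k j y = 2 * \<beta> * (std_normal_density y * (sqrt (1 + \<bar>c j\<bar>) / sqrt \<bar>y - c j\<bar>))" for j y
  have Pn: "0 \<le> P" unfolding P_def by (simp add: prod_nonneg)
  have Un: "0 \<le> U y" for y unfolding U_def by (simp add: prod_nonneg)
  have kn: "0 \<le> k j y" for j y unfolding k_def using b by simp
  have eqP: "(\<Prod>j\<in>J. \<bar>y - c j\<bar> powr \<beta>) = P * U y" for y
  proof -
    have "(\<Prod>j\<in>J. \<bar>y - c j\<bar> powr \<beta>) = (\<Prod>j\<in>J. (1 + \<bar>c j\<bar>) powr \<beta> * (\<bar>y - c j\<bar> / (1 + \<bar>c j\<bar>)) powr \<beta>)"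
    proof (intro prod.cong refl)
      fix j
      have "\<bar>y - c j\<bar> = (1 + \<bar>c j\<bar>) * (\<bar>y - c j\<bar> / (1 + \<bar>c j\<bar>))"
        by (simp add: add_pos_nonneg)
      then show "\<bar>y - c j\<bar> powr \<beta> = (1 + \<bar>c j\<bar>) powr \<beta> * (\<bar>y - c j\<bar> / (1 + \<bar>c j\<bar>)) powr \<beta>"
        by (metis powr_mult)
    qed
    then show ?thesis unfolding P_def U_def by (simp add: prod.distrib)
  qed
  have kb: "(\<integral>\<^sup>+y. ennreal (k j y) \<partial>lborel) \<le> ennreal (2 * \<beta> * 20)" for j
  proof -
    have "(\<integral>\<^sup>+y. ennreal (k j y) \<partial>lborel) = ennreal (2 * \<beta>) * (\<integral>\<^sup>+y. ennreal (std_normal_density y * (sqrt (1 + \<bar>c j\<bar>) / sqrt \<bar>y - c j\<bar>)) \<partial>lborel)"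
    proof -
      have "(\<integral>\<^sup>+y. ennreal (k j y) \<partial>lborel) = (\<integral>\<^sup>+y. ennreal (2 * \<beta>) * ennreal (std_normal_density y * (sqrt (1 + \<bar>c j\<bar>) / sqrt \<bar>y - c j\<bar>)) \<partial>lborel)"
        unfolding k_def by (intro nn_integral_cong) (rule ennreal_mult, use b in auto)
      also have "\<dots> = ennreal (2 * \<beta>) * (\<integral>\<^sup>+y. ennreal (std_normal_density y * (sqrt (1 + \<bar>c j\<bar>) / sqrt \<bar>y - c j\<bar>)) \<partial>lborel)"
        by (rule nn_integral_cmult) measurable
      finally show ?thesis .
    qed
    also have "\<dots> \<le> ennreal (2 * \<beta>) * 20"
    proof (intro mult_left_mono)
      have "(\<integral>\<^sup>+y. ennreal (std_normal_density y * (sqrt (1 + \<bar>c j\<bar>) / sqrt \<bar>y - c j\<bar>)) \<partial>lborel)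
         \<le> (\<integral>\<^sup>+y. ennreal (std_normal_density y * (1 + \<bar>y\<bar>) * (sqrt (1 + \<bar>c j\<bar>) / sqrt \<bar>y - c j\<bar>)) \<partial>lborel)"
      proof (intro nn_integral_mono ennreal_leI)
        fix y :: real
        have "0 \<le> std_normal_density y * (sqrt (1 + \<bar>c j\<bar>) / sqrt \<bar>y - c j\<bar>)" by simp
        then have "std_normal_density y * (sqrt (1 + \<bar>c j\<bar>) / sqrt \<bar>y - c j\<bar>) * 1 \<le> std_normal_density y * (sqrt (1 + \<bar>c j\<bar>) / sqrt \<bar>y - c j\<bar>) * (1 + \<bar>y\<bar>)"
          by (intro mult_left_mono) auto
        then show "std_normal_density y * (sqrt (1 + \<bar>c j\<bar>) / sqrt \<bar>y - c j\<bar>) \<le> std_normal_density y * (1 + \<bar>y\<bar>) * (sqrt (1 + \<bar>c j\<bar>) / sqrt \<bar>y - c j\<bar>)"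
          by (simp add: ac_simps)
      qed
      also have "\<dots> \<le> 20" by (rule kernel_bound)
      finally show "(\<integral>\<^sup>+y. ennreal (std_normal_density y * (sqrt (1 + \<bar>c j\<bar>) / sqrt \<bar>y - c j\<bar>)) \<partial>lborel) \<le> 20" .
    qed auto
    also have "\<dots> = ennreal (2 * \<beta>) * ennreal 20" by simp
    also have "\<dots> = ennreal (2 * \<beta> * 20)" by (intro ennreal_mult[symmetric]) (use b in auto)
    finally show ?thesis .
  qed
  have "1 = (\<integral>\<^sup>+y. ennreal (std_normal_density y) \<partial>lborel)" by (simp add: phi_int1)
  also have "\<dots> \<le> (\<integral>\<^sup>+y. ennreal (std_normal_density y * U y) + (\<Sum>j\<in>J. ennreal (k j y)) \<partial>lborel)"
  proof (intro nn_integral_mono_AE)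
    show "AE y in lborel. ennreal (std_normal_density y) \<le> ennreal (std_normal_density y * U y) + (\<Sum>j\<in>J. ennreal (k j y))"
      using AE_avoid[OF J, of c]
    proof eventually_elim
      case (elim y)
      have pi: "1 \<le> U y + (\<Sum>j\<in>J. 2 * \<beta> * (sqrt (1 + \<bar>c j\<bar>) / sqrt \<bar>y - c j\<bar>))"
        unfolding U_def by (rule prod_ineq[OF J b]) (use elim in auto)
      have "std_normal_density y * 1 \<le> std_normal_density y * (U y + (\<Sum>j\<in>J. 2 * \<beta> * (sqrt (1 + \<bar>c j\<bar>) / sqrt \<bar>y - c j\<bar>)))"
        using pi by (intro mult_left_mono) auto
      also have "\<dots> = std_normal_density y * U y + (\<Sum>j\<in>J. k j y)"
        unfolding k_def by (simp add: distrib_left sum_distrib_left ac_simps)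
      finally have r: "std_normal_density y \<le> std_normal_density y * U y + (\<Sum>j\<in>J. k j y)" by simp
      have "ennreal (std_normal_density y) \<le> ennreal (std_normal_density y * U y + (\<Sum>j\<in>J. k j y))"
        using r by (rule ennreal_leI)
      also have "\<dots> = ennreal (std_normal_density y * U y) + (\<Sum>j\<in>J. ennreal (k j y))"
        using Un kn by (subst ennreal_plus) (auto intro: sum_nonneg)
      finally show ?case .
    qed
  qed
  also have "\<dots> = (\<integral>\<^sup>+y. ennreal (std_normal_density y * U y) \<partial>lborel) + (\<Sum>j\<in>J. \<integral>\<^sup>+y. ennreal (k j y) \<partial>lborel)"
    unfolding U_def k_def by (subst nn_integral_add) (auto simp: nn_integral_sum)
  also have "\<dots> \<le> (\<integral>\<^sup>+y. ennreal (std_normal_density y * U y) \<partial>lborel) + (\<Sum>j\<in>J. ennreal (2 * \<beta> * 20))"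
    by (intro add_left_mono sum_mono kb)
  also have "(\<Sum>j\<in>J. ennreal (2 * \<beta> * 20)) = ennreal (40 * \<beta> * card J)"
    using b by (simp add: ennreal_mult[symmetric] ennreal_of_nat_eq_real_of_nat ac_simps)
  also have "\<dots> \<le> ennreal (1/2)" using small by (rule ennreal_leI)
  finally have A: "ennreal (1/2) \<le> (\<integral>\<^sup>+y. ennreal (std_normal_density y * U y) \<partial>lborel)"
    by (intro ennreal_half_aux) (auto elim: order_trans intro: add_left_mono)
  have P2: "P / 2 = P * (1/2)" by simp
  have "ennreal (P / 2) = ennreal P * ennreal (1/2)" unfolding P2 by (rule ennreal_mult) (use Pn in auto)
  also have "\<dots> \<le> ennreal P * (\<integral>\<^sup>+y. ennreal (std_normal_density y * U y) \<partial>lborel)"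
    by (intro mult_left_mono A) auto
  also have "\<dots> = (\<integral>\<^sup>+y. ennreal P * ennreal (std_normal_density y * U y) \<partial>lborel)"
    unfolding U_def by (subst nn_integral_cmult) auto
  also have "\<dots> = (\<integral>\<^sup>+y. ennreal (std_normal_density y * (\<Prod>j\<in>J. \<bar>y - c j\<bar> powr \<beta>)) \<partial>lborel)"
    using Pn Un by (intro nn_integral_cong) (simp add: eqP ennreal_mult[symmetric] ac_simps)
  finally show ?thesis unfolding P_def .
qed

lemma ln_abs_bound:
  fixes b u y :: real
  assumes b: "1 \<le> b"
  shows "\<bar>ln \<bar>u - y / b\<bar>\<bar> \<le> 2 * sqrt b / sqrt \<bar>y - b * u\<bar> + ln (1 + \<bar>u\<bar>) + \<bar>y\<bar>"
proof -
  define s where "s = \<bar>u - y / b\<bar>"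
  have s0: "0 \<le> s" unfolding s_def by simp
  have t0: "0 \<le> 2 * sqrt b / sqrt \<bar>y - b * u\<bar>" using b by simp
  have l0: "0 \<le> ln (1 + \<bar>u\<bar>)" by simp
  have sb: "s = \<bar>y - b * u\<bar> / b"
  proof -
    have "u - y / b = (b * u - y) / b" using b by (simp add: field_simps)
    then show ?thesis unfolding s_def using b by (simp add: abs_minus_commute)
  qed
  have ls: "ln (1 + s) \<le> ln (1 + \<bar>u\<bar>) + \<bar>y\<bar>"
  proof -
    have "\<bar>y\<bar> / b \<le> \<bar>y\<bar>" using b by (simp add: divide_le_eq_1 divide_le_eq mult_le_cancel_left1 mult_le_cancel_right1)
    moreover have "s \<le> \<bar>u\<bar> + \<bar>y\<bar> / b" unfolding s_def using abs_triangle_ineq4[of u "y/b"] b by simp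
    ultimately have "1 + s \<le> (1 + \<bar>u\<bar>) * (1 + \<bar>y\<bar>)"
      by (simp add: algebra_simps) (smt (verit) abs_ge_zero mult_nonneg_nonneg)
    then have "ln (1 + s) \<le> ln ((1 + \<bar>u\<bar>) * (1 + \<bar>y\<bar>))" using s0 by simp
    also have "\<dots> = ln (1 + \<bar>u\<bar>) + ln (1 + \<bar>y\<bar>)"
    proof -
      have "1 + \<bar>u\<bar> \<noteq> 0" "1 + \<bar>y\<bar> \<noteq> 0" using abs_ge_zero[of u] abs_ge_zero[of y] by linarith+
      then show ?thesis by (simp add: ln_mult)
    qed
    also have "ln (1 + \<bar>y\<bar>) \<le> \<bar>y\<bar>" by (rule ln_add_one_self_le_self) simp
    finally show ?thesis by simp
  qed
  show ?thesis
  proof (cases "s = 0")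
    case True
    then show ?thesis unfolding s_def[symmetric] using t0 l0 by simp
  next
    case False
    then have sp: "0 < s" using s0 by simp
    have k: "2 / sqrt s = 2 * sqrt b / sqrt \<bar>y - b * u\<bar>"
      unfolding sb using b by (simp add: real_sqrt_divide)
    have "\<bar>ln s\<bar> \<le> 2 / sqrt s + ln (1 + s)"
    proof (cases "s < 1")
      case True
      then have "ln s \<le> 0" using sp by simp
      moreover have "ln s \<ge> - 2 / sqrt s" using sp by (rule ln_ge_sqrt)
      moreover have "0 \<le> ln (1 + s)" using s0 by simp
      ultimately show ?thesis by simp
    next
      case False
      then have a: "0 \<le> ln s" by simp
      have c: "ln s \<le> ln (1 + s)" using sp by simp
      have d: "0 \<le> 2 / sqrt s" using sp by simp
      have "\<bar>ln s\<bar> = ln s" using a by simp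
      then show ?thesis using c d by linarith
    qed
    then show ?thesis unfolding s_def[symmetric] k using ls by linarith
  qed
qed

lemma ennreal_lin3:
  fixes x1 x2 x3 x4 x5 :: real
  assumes "0 \<le> x1" "0 \<le> x2" "0 \<le> x3" "0 \<le> x4" "0 \<le> x5"
  shows "ennreal (x1 * x2 + x3 * x4 + x5) = ennreal x1 * ennreal x2 + ennreal x3 * ennreal x4 + ennreal x5"
proof -
  have "ennreal (x1 * x2 + x3 * x4 + x5) = ennreal (x1 * x2 + x3 * x4) + ennreal x5" by (rule ennreal_plus) (use assms in auto)
  also have "ennreal (x1 * x2 + x3 * x4) = ennreal (x1 * x2) + ennreal (x3 * x4)" by (rule ennreal_plus) (use assms in auto)
  also have "ennreal (x1 * x2) = ennreal x1 * ennreal x2" by (rule ennreal_mult) (use assms in auto)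
  also have "ennreal (x3 * x4) = ennreal x3 * ennreal x4" by (rule ennreal_mult) (use assms in auto)
  finally show ?thesis .
qed

lemma Fint:
  fixes b u :: real
  assumes b: "1 \<le> b"
  shows "(\<integral>\<^sup>+y. ennreal (std_normal_density y * \<bar>ln \<bar>u - y / b\<bar>\<bar> * (1 + \<bar>y\<bar>)) \<partial>lborel)
     \<le> ennreal (40 * sqrt b + 4 * ln (1 + \<bar>u\<bar>) + 4)"
proof -
  define v where "v = b * u"
  define K where "K y = std_normal_density y * (1 + \<bar>y\<bar>) * (sqrt (1 + \<bar>v\<bar>) / sqrt \<bar>y - v\<bar>)" for y
  define M where "M y = std_normal_density y * (1 + \<bar>y\<bar>)^2" for y
  have Kn: "0 \<le> K y" for y unfolding K_def by simp
  have Mn: "0 \<le> M y" for y unfolding M_def by simp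
  have sb: "0 \<le> 2 * sqrt b" "0 \<le> ln (1 + \<bar>u\<bar>)" using b by simp_all
  have pw: "std_normal_density y * \<bar>ln \<bar>u - y / b\<bar>\<bar> * (1 + \<bar>y\<bar>) \<le> (2 * sqrt b) * K y + ln (1 + \<bar>u\<bar>) * M y + M y" for y
  proof -
    let ?p = "std_normal_density y * (1 + \<bar>y\<bar>)"
    have p0: "0 \<le> ?p" by simp
    have "std_normal_density y * \<bar>ln \<bar>u - y / b\<bar>\<bar> * (1 + \<bar>y\<bar>) = ?p * \<bar>ln \<bar>u - y / b\<bar>\<bar>" by simp
    also have "\<dots> \<le> ?p * (2 * sqrt b / sqrt \<bar>y - v\<bar> + ln (1 + \<bar>u\<bar>) + \<bar>y\<bar>)"
      unfolding v_def by (intro mult_left_mono ln_abs_bound b p0)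
    also have "\<dots> = (2 * sqrt b) * (?p * (1 / sqrt \<bar>y - v\<bar>)) + ln (1 + \<bar>u\<bar>) * ?p + ?p * \<bar>y\<bar>"
      by (simp add: algebra_simps add_divide_distrib)
    also have "\<dots> \<le> (2 * sqrt b) * K y + ln (1 + \<bar>u\<bar>) * M y + M y"
    proof (intro add_mono mult_left_mono sb)
      have "?p * (1 / sqrt \<bar>y - v\<bar>) * 1 \<le> ?p * (1 / sqrt \<bar>y - v\<bar>) * sqrt (1 + \<bar>v\<bar>)"
        by (intro mult_left_mono) auto
      then show "?p * (1 / sqrt \<bar>y - v\<bar>) \<le> K y" unfolding K_def by simp
      have "?p * 1 \<le> ?p * (1 + \<bar>y\<bar>)" by (intro mult_left_mono p0) simp
      then show "?p \<le> M y" unfolding M_def by (simp add: power2_eq_square ac_simps)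
      have "?p * \<bar>y\<bar> \<le> ?p * (1 + \<bar>y\<bar>)" by (intro mult_left_mono p0) simp
      then show "?p * \<bar>y\<bar> \<le> M y" unfolding M_def by (simp add: power2_eq_square ac_simps)
    qed
    finally show ?thesis .
  qed
  have "(\<integral>\<^sup>+y. ennreal (std_normal_density y * \<bar>ln \<bar>u - y / b\<bar>\<bar> * (1 + \<bar>y\<bar>)) \<partial>lborel)
     \<le> (\<integral>\<^sup>+y. ennreal (2 * sqrt b) * ennreal (K y) + ennreal (ln (1 + \<bar>u\<bar>)) * ennreal (M y) + ennreal (M y) \<partial>lborel)"
  proof (intro nn_integral_mono)
    fix y
    have "ennreal (std_normal_density y * \<bar>ln \<bar>u - y / b\<bar>\<bar> * (1 + \<bar>y\<bar>)) \<le> ennreal ((2 * sqrt b) * K y + ln (1 + \<bar>u\<bar>) * M y + M y)"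
      by (rule ennreal_leI[OF pw])
    also have "\<dots> = ennreal (2 * sqrt b) * ennreal (K y) + ennreal (ln (1 + \<bar>u\<bar>)) * ennreal (M y) + ennreal (M y)"
      using sb Kn[of y] Mn[of y] by (intro ennreal_lin3) auto
    finally show "ennreal (std_normal_density y * \<bar>ln \<bar>u - y / b\<bar>\<bar> * (1 + \<bar>y\<bar>)) \<le> ennreal (2 * sqrt b) * ennreal (K y) + ennreal (ln (1 + \<bar>u\<bar>)) * ennreal (M y) + ennreal (M y)" .
  qed
  also have "\<dots> = ennreal (2 * sqrt b) * (\<integral>\<^sup>+y. ennreal (K y) \<partial>lborel) + ennreal (ln (1 + \<bar>u\<bar>)) * (\<integral>\<^sup>+y. ennreal (M y) \<partial>lborel) + (\<integral>\<^sup>+y. ennreal (M y) \<partial>lborel)"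
    unfolding K_def M_def by (simp add: nn_integral_add nn_integral_cmult)
  also have "\<dots> \<le> ennreal (2 * sqrt b) * 20 + ennreal (ln (1 + \<bar>u\<bar>)) * 4 + 4"
    unfolding K_def M_def by (intro add_mono mult_left_mono kernel_bound phi_moment) auto
  also have "\<dots> = ennreal (2 * sqrt b) * ennreal 20 + ennreal (ln (1 + \<bar>u\<bar>)) * ennreal 4 + ennreal 4" by simp
  also have "\<dots> = ennreal (2 * sqrt b * 20 + ln (1 + \<bar>u\<bar>) * 4 + 4)"
    using sb by (intro ennreal_lin3[symmetric]) auto
  also have "2 * sqrt b * 20 + ln (1 + \<bar>u\<bar>) * 4 + 4 = 40 * sqrt b + 4 * ln (1 + \<bar>u\<bar>) + 4" by simp
  finally show ?thesis .
qed

lemma prod_bound: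
  fixes c :: "nat \<Rightarrow> real" and J :: "nat set" and \<beta> :: real
  assumes J: "finite J" and b: "0 \<le> \<beta>" and small: "\<beta> * card J \<le> 1"
  shows "(\<Prod>j\<in>J. \<bar>y - c j\<bar> powr \<beta>) \<le> (\<Prod>j\<in>J. (1 + \<bar>c j\<bar>) powr \<beta>) * (1 + \<bar>y\<bar>)"
proof -
  have "(\<Prod>j\<in>J. \<bar>y - c j\<bar> powr \<beta>) \<le> (\<Prod>j\<in>J. (1 + \<bar>y\<bar>) powr \<beta> * (1 + \<bar>c j\<bar>) powr \<beta>)"
  proof (intro prod_mono conjI)
    fix j assume "j \<in> J"
    show "0 \<le> \<bar>y - c j\<bar> powr \<beta>" by simp
    have "\<bar>y - c j\<bar> \<le> (1 + \<bar>y\<bar>) * (1 + \<bar>c j\<bar>)"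
    proof -
      have "\<bar>y - c j\<bar> \<le> \<bar>y\<bar> + \<bar>c j\<bar>" by (rule abs_triangle_ineq4)
      also have "\<dots> \<le> (1 + \<bar>y\<bar>) * (1 + \<bar>c j\<bar>)" by (simp add: algebra_simps)
      finally show ?thesis .
    qed
    then have "\<bar>y - c j\<bar> powr \<beta> \<le> ((1 + \<bar>y\<bar>) * (1 + \<bar>c j\<bar>)) powr \<beta>"
      using b by (intro powr_mono2) auto
    then show "\<bar>y - c j\<bar> powr \<beta> \<le> (1 + \<bar>y\<bar>) powr \<beta> * (1 + \<bar>c j\<bar>) powr \<beta>"
      by (simp add: powr_mult)
  qed
  also have "\<dots> = (\<Prod>j\<in>J. (1 + \<bar>c j\<bar>) powr \<beta>) * ((1 + \<bar>y\<bar>) powr \<beta>) ^ card J"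
    by (simp add: prod.distrib mult.commute)
  also have "((1 + \<bar>y\<bar>) powr \<beta>) ^ card J = (1 + \<bar>y\<bar>) powr (real (card J) * \<beta>)"
  proof -
    have "1 + \<bar>y\<bar> \<noteq> 0" using abs_ge_zero[of y] by linarith
    then show ?thesis by (rule powr_power)
  qed
  also have "(1 + \<bar>y\<bar>) powr (real (card J) * \<beta>) \<le> (1 + \<bar>y\<bar>) powr 1"
    using small by (intro powr_mono) (auto simp: mult.commute)
  also have "(1 + \<bar>y\<bar>) powr (1::real) = 1 + \<bar>y\<bar>" by simp
  finally show ?thesis by (simp add: prod_nonneg mult_left_mono)
qed

lemma Nup:
  fixes c :: "nat \<Rightarrow> real" and J :: "nat set" and \<beta> :: real and f :: "real \<Rightarrow> real"
  assumes J: "finite J" and b: "0 \<le> \<beta>" and small: "\<beta> * card J \<le> 1"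
    and fn: "\<And>y. 0 \<le> f y" and fm[measurable]: "f \<in> borel_measurable borel"
  shows "(\<integral>\<^sup>+y. ennreal (std_normal_density y * f y * (\<Prod>j\<in>J. \<bar>y - c j\<bar> powr \<beta>)) \<partial>lborel)
    \<le> ennreal (\<Prod>j\<in>J. (1 + \<bar>c j\<bar>) powr \<beta>) * (\<integral>\<^sup>+y. ennreal (std_normal_density y * f y * (1 + \<bar>y\<bar>)) \<partial>lborel)"
proof -
  define P where "P = (\<Prod>j\<in>J. (1 + \<bar>c j\<bar>) powr \<beta>)"
  have Pn: "0 \<le> P" unfolding P_def by (simp add: prod_nonneg)
  have "(\<integral>\<^sup>+y. ennreal (std_normal_density y * f y * (\<Prod>j\<in>J. \<bar>y - c j\<bar> powr \<beta>)) \<partial>lborel)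
     \<le> (\<integral>\<^sup>+y. ennreal P * ennreal (std_normal_density y * f y * (1 + \<bar>y\<bar>)) \<partial>lborel)"
  proof (intro nn_integral_mono)
    fix y
    have q0: "0 \<le> std_normal_density y * f y" using fn[of y] by simp
    have "std_normal_density y * f y * (\<Prod>j\<in>J. \<bar>y - c j\<bar> powr \<beta>) \<le> std_normal_density y * f y * (P * (1 + \<bar>y\<bar>))"
      unfolding P_def by (intro mult_left_mono prod_bound J b small q0)
    also have "\<dots> = P * (std_normal_density y * f y * (1 + \<bar>y\<bar>))" by (simp add: ac_simps)
    finally have "ennreal (std_normal_density y * f y * (\<Prod>j\<in>J. \<bar>y - c j\<bar> powr \<beta>)) \<le> ennreal (P * (std_normal_density y * f y * (1 + \<bar>y\<bar>)))"
      by (rule ennreal_leI)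
    also have "\<dots> = ennreal P * ennreal (std_normal_density y * f y * (1 + \<bar>y\<bar>))"
      by (rule ennreal_mult) (use Pn q0 in auto)
    finally show "ennreal (std_normal_density y * f y * (\<Prod>j\<in>J. \<bar>y - c j\<bar> powr \<beta>)) \<le> ennreal P * ennreal (std_normal_density y * f y * (1 + \<bar>y\<bar>))" .
  qed
  also have "\<dots> = ennreal P * (\<integral>\<^sup>+y. ennreal (std_normal_density y * f y * (1 + \<bar>y\<bar>)) \<partial>lborel)"
    by (rule nn_integral_cmult) measurable
  finally show ?thesis unfolding P_def .
qed

lemma Inner:
  fixes c :: "nat \<Rightarrow> real" and J :: "nat set" and \<beta> b u :: real
  assumes J: "finite J" and bt: "0 \<le> \<beta>" and small: "40 * \<beta> * card J \<le> 1/2" and b: "1 \<le> b"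
  shows "(\<integral>\<^sup>+y. ennreal (std_normal_density y * \<bar>ln \<bar>u - y / b\<bar>\<bar> * (\<Prod>j\<in>J. \<bar>y - c j\<bar> powr \<beta>)) \<partial>lborel)
    \<le> ennreal (2 * (40 * sqrt b + 4 * ln (1 + \<bar>u\<bar>) + 4)) * (\<integral>\<^sup>+y. ennreal (std_normal_density y * (\<Prod>j\<in>J. \<bar>y - c j\<bar> powr \<beta>)) \<partial>lborel)"
proof -
  define P where "P = (\<Prod>j\<in>J. (1 + \<bar>c j\<bar>) powr \<beta>)"
  define E where "E = 40 * sqrt b + 4 * ln (1 + \<bar>u\<bar>) + 4"
  have Pn: "0 \<le> P" unfolding P_def by (simp add: prod_nonneg)
  have En: "0 \<le> E" unfolding E_def using b by simp
  have small': "\<beta> * card J \<le> 1" using small bt by simp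
  have "(\<integral>\<^sup>+y. ennreal (std_normal_density y * \<bar>ln \<bar>u - y / b\<bar>\<bar> * (\<Prod>j\<in>J. \<bar>y - c j\<bar> powr \<beta>)) \<partial>lborel)
     \<le> ennreal P * (\<integral>\<^sup>+y. ennreal (std_normal_density y * \<bar>ln \<bar>u - y / b\<bar>\<bar> * (1 + \<bar>y\<bar>)) \<partial>lborel)"
    unfolding P_def by (rule Nup[OF J bt small']) auto
  also have "\<dots> \<le> ennreal P * ennreal E"
    unfolding E_def by (intro mult_left_mono Fint b) auto
  also have "\<dots> = ennreal (2 * E) * ennreal (P / 2)"
    using Pn En by (simp add: ennreal_mult[symmetric])
  also have "\<dots> \<le> ennreal (2 * E) * (\<integral>\<^sup>+y. ennreal (std_normal_density y * (\<Prod>j\<in>J. \<bar>y - c j\<bar> powr \<beta>)) \<partial>lborel)"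
    unfolding P_def by (intro mult_left_mono Zlow[OF J bt small]) auto
  finally show ?thesis unfolding E_def .
qed

lemma pairs_split:
  "{(i,j). i < j \<and> j < (n::nat)} = (\<lambda>j. (0,j)) ` {1..<n} \<union> {(i,j). 1 \<le> i \<and> i < j \<and> j < n}"
  by (auto simp: image_def)

lemma dens_split:
  fixes x :: "nat \<Rightarrow> real"
  assumes n: "1 \<le> n"
  shows "beta_dens n \<beta> (x(0:=y)) =
    (exp (- (1/2) * (\<Sum>i\<in>{1..<n}. (x i)\<^sup>2)) * (\<Prod>(i,j)\<in>{(i,j). 1 \<le> i \<and> i < j \<and> j < n}. \<bar>x i - x j\<bar> powr \<beta>))
    * exp (- (1/2) * y\<^sup>2) * (\<Prod>j\<in>{1..<n}. \<bar>y - x j\<bar> powr \<beta>)"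
proof -
  have U: "{..<n} = insert 0 {1..<n}" using n by auto
  have s: "(\<Sum>i<n. ((x(0:=y)) i)\<^sup>2) = y\<^sup>2 + (\<Sum>i\<in>{1..<n}. (x i)\<^sup>2)"
    unfolding U by (subst sum.insert) (auto intro!: sum.cong)
  have fin: "finite {(i,j). 1 \<le> i \<and> i < j \<and> j < (n::nat)}"
    by (rule finite_subset[of _ "{..<n} \<times> {..<n}"]) auto
  have disj: "(\<lambda>j. (0::nat,j)) ` {1..<n} \<inter> {(i,j). 1 \<le> i \<and> i < j \<and> j < n} = {}" by auto
  have p: "(\<Prod>(i,j)\<in>{(i,j). i < j \<and> j < n}. \<bar>(x(0:=y)) i - (x(0:=y)) j\<bar> powr \<beta>)
     = (\<Prod>j\<in>{1..<n}. \<bar>y - x j\<bar> powr \<beta>) * (\<Prod>(i,j)\<in>{(i,j). 1 \<le> i \<and> i < j \<and> j < n}. \<bar>x i - x j\<bar> powr \<beta>)"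
  proof -
    have "(\<Prod>(i,j)\<in>{(i,j). i < j \<and> j < n}. \<bar>(x(0:=y)) i - (x(0:=y)) j\<bar> powr \<beta>)
      = (\<Prod>(i,j)\<in>(\<lambda>j. (0,j)) ` {1..<n}. \<bar>(x(0:=y)) i - (x(0:=y)) j\<bar> powr \<beta>) *
        (\<Prod>(i,j)\<in>{(i,j). 1 \<le> i \<and> i < j \<and> j < n}. \<bar>(x(0:=y)) i - (x(0:=y)) j\<bar> powr \<beta>)"
      unfolding pairs_split by (rule prod.union_disjoint) (use fin disj in auto)
    also have "(\<Prod>(i,j)\<in>(\<lambda>j. (0,j)) ` {1..<n}. \<bar>(x(0:=y)) i - (x(0:=y)) j\<bar> powr \<beta>) = (\<Prod>j\<in>{1..<n}. \<bar>y - x j\<bar> powr \<beta>)"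
      by (subst prod.reindex) (auto simp: inj_on_def intro!: prod.cong)
    also have "(\<Prod>(i,j)\<in>{(i,j). 1 \<le> i \<and> i < j \<and> j < n}. \<bar>(x(0:=y)) i - (x(0:=y)) j\<bar> powr \<beta>)
        = (\<Prod>(i,j)\<in>{(i,j). 1 \<le> i \<and> i < j \<and> j < n}. \<bar>x i - x j\<bar> powr \<beta>)"
      by (intro prod.cong refl) auto
    finally show ?thesis .
  qed
  have e: "exp (- (1/2) * (y\<^sup>2 + (\<Sum>i\<in>{1..<n}. (x i)\<^sup>2))) = exp (- (1/2) * y\<^sup>2) * exp (- (1/2) * (\<Sum>i\<in>{1..<n}. (x i)\<^sup>2))"
    by (simp add: exp_add[symmetric] algebra_simps)
  show ?thesis unfolding beta_dens_def s p e
    by (simp add: ac_simps)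
qed

lemma div_le_aux: "N \<le> C * Z \<Longrightarrow> N / Z \<le> (C::ennreal)"
proof -
  assume h: "N \<le> C * Z"
  show ?thesis
  proof (cases "Z = 0")
    case True
    then have "N = 0" using h by simp
    then show ?thesis by simp
  next
    case False
    show ?thesis
    proof (cases "Z = top")
      case True then show ?thesis by simp
    next
      case nt: False
      have "N / Z \<le> (C * Z) / Z" using h by (rule divide_right_mono_ennreal)
      also have "\<dots> = C" using False nt by (rule ennreal_mult_divide_eq)
      finally show ?thesis .
    qed
  qed
qed

lemma exp_phi: "exp (- (1/2) * y\<^sup>2) = sqrt (2 * pi) * std_normal_density y"
  by (simp add: std_normal_density_def)

lemma Outer:
  fixes n :: nat and \<beta> B u :: real
  assumes n: "1 \<le> n" and bt: "0 \<le> \<beta>" and small: "40 * \<beta> * real (n - 1) \<le> 1/2" and B: "1 \<le> B"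
  shows "beta_expect n \<beta> (\<lambda>l. \<bar>ln \<bar>u - l 0 / B\<bar>\<bar>) \<le> ennreal (2 * (40 * sqrt B + 4 * ln (1 + \<bar>u\<bar>) + 4))"
proof -
  define C where "C = 2 * (40 * sqrt B + 4 * ln (1 + \<bar>u\<bar>) + 4)"
  interpret product_sigma_finite "\<lambda>_::nat. lborel :: real measure"
    by (simp add: product_sigma_finite_def sigma_finite_lborel)
  have U: "{..<n} = insert 0 {1..<n}" using n by auto
  have fin: "finite {1..<n}" and nin: "0 \<notin> {1..<n}" by auto
  have cardJ: "card {1..<n} = n - 1" by simp
  have smallJ: "40 * \<beta> * card {1..<n} \<le> 1/2" using small by simp
  have mD0: "(\<lambda>l. beta_dens n \<beta> l) \<in> borel_measurable (Pi\<^sub>M {..<n} (\<lambda>_. lborel))"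
  proof -
    have mS: "(\<lambda>x. \<Sum>i<n. (x i)\<^sup>2) \<in> borel_measurable (Pi\<^sub>M {..<n} (\<lambda>_. lborel :: real measure))"
    proof (rule borel_measurable_sum)
      fix i assume i: "i \<in> {..<n}"
      have [measurable]: "(\<lambda>x. x i) \<in> borel_measurable (Pi\<^sub>M {..<n} (\<lambda>_. lborel :: real measure))"
        using measurable_component_singleton[OF i, of "\<lambda>_. lborel :: real measure"] by (simp add: measurable_def)
      show "(\<lambda>x. (x i)\<^sup>2) \<in> borel_measurable (Pi\<^sub>M {..<n} (\<lambda>_. lborel :: real measure))" by measurable
    qed
    have mP: "(\<lambda>x. \<Prod>p\<in>{(i,j). i < j \<and> j < n}. (case p of (i,j) \<Rightarrow> \<bar>x i - x j\<bar> powr \<beta>)) \<in> borel_measurable (Pi\<^sub>M {..<n} (\<lambda>_. lborel :: real measure))"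
    proof (rule borel_measurable_prod)
      fix p assume "p \<in> {(i,j). i < j \<and> j < n}"
      then obtain i j where p: "p = (i,j)" and ij: "i < n" "j < n" by auto
      have [measurable]: "(\<lambda>x. x i) \<in> borel_measurable (Pi\<^sub>M {..<n} (\<lambda>_. lborel :: real measure))"
        using ij measurable_component_singleton[of _ "{..<n}" "\<lambda>_. lborel :: real measure"] by (simp add: measurable_def)
      have [measurable]: "(\<lambda>x. x j) \<in> borel_measurable (Pi\<^sub>M {..<n} (\<lambda>_. lborel :: real measure))"
        using ij measurable_component_singleton[of _ "{..<n}" "\<lambda>_. lborel :: real measure"] by (simp add: measurable_def)
      show "(\<lambda>x. case p of (i,j) \<Rightarrow> \<bar>x i - x j\<bar> powr \<beta>) \<in> borel_measurable (Pi\<^sub>M {..<n} (\<lambda>_. lborel :: real measure))"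
        unfolding p by simp measurable
    qed
    show ?thesis unfolding beta_dens_def using mS mP by measurable
  qed
  have mD[measurable]: "(\<lambda>l. beta_dens n \<beta> l) \<in> borel_measurable (Pi\<^sub>M (insert 0 {1..<n}) (\<lambda>_. lborel))"
    using mD0 unfolding U .
  have mN[measurable]: "(\<lambda>l. \<bar>ln \<bar>u - l 0 / B\<bar>\<bar>) \<in> borel_measurable (Pi\<^sub>M (insert 0 {1..<n}) (\<lambda>_. lborel))"
    by measurable
  define R where "R x = sqrt (2 * pi) * (exp (- (1/2) * (\<Sum>i\<in>{1..<n}. (x i)\<^sup>2)) * (\<Prod>(i,j)\<in>{(i,j). 1 \<le> i \<and> i < j \<and> j < n}. \<bar>x i - x j\<bar> powr \<beta>))" for x :: "nat \<Rightarrow> real"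
  define W where "W x y = (\<Prod>j\<in>{1..<n}. \<bar>y - x j\<bar> powr \<beta>)" for x :: "nat \<Rightarrow> real" and y :: real
  have Rn: "0 \<le> R x" for x unfolding R_def by (simp add: prod_nonneg case_prod_beta)
  have Wn: "0 \<le> W x y" for x y unfolding W_def by (simp add: prod_nonneg)
  have Dsplit: "beta_dens n \<beta> (x(0:=y)) = R x * (std_normal_density y * W x y)" for x y
    unfolding dens_split[OF n] R_def W_def exp_phi by (simp add: ac_simps)
  have inner: "(\<integral>\<^sup>+y. ennreal (\<bar>ln \<bar>u - (x(0:=y)) 0 / B\<bar>\<bar> * beta_dens n \<beta> (x(0:=y))) \<partial>lborel)
      \<le> (\<integral>\<^sup>+y. ennreal C * ennreal (beta_dens n \<beta> (x(0:=y))) \<partial>lborel)"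
    if hx: "x \<in> space (Pi\<^sub>M {1..<n} (\<lambda>_. lborel :: real measure))" for x
  proof -
    have "(\<integral>\<^sup>+y. ennreal (\<bar>ln \<bar>u - (x(0:=y)) 0 / B\<bar>\<bar> * beta_dens n \<beta> (x(0:=y))) \<partial>lborel)
        = (\<integral>\<^sup>+y. ennreal (R x) * ennreal (std_normal_density y * \<bar>ln \<bar>u - y / B\<bar>\<bar> * W x y) \<partial>lborel)"
    proof (intro nn_integral_cong)
      fix y
      have eqy: "\<bar>ln \<bar>u - (x(0:=y)) 0 / B\<bar>\<bar> * beta_dens n \<beta> (x(0:=y)) = R x * (std_normal_density y * \<bar>ln \<bar>u - y / B\<bar>\<bar> * W x y)"
        unfolding Dsplit by (simp add: ac_simps)
      show "ennreal (\<bar>ln \<bar>u - (x(0:=y)) 0 / B\<bar>\<bar> * beta_dens n \<beta> (x(0:=y))) = ennreal (R x) * ennreal (std_normal_density y * \<bar>ln \<bar>u - y / B\<bar>\<bar> * W x y)"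
        unfolding eqy by (rule ennreal_mult) (use Rn[of x] Wn[of x y] in auto)
    qed
    also have "\<dots> = ennreal (R x) * (\<integral>\<^sup>+y. ennreal (std_normal_density y * \<bar>ln \<bar>u - y / B\<bar>\<bar> * W x y) \<partial>lborel)"
      unfolding W_def by (rule nn_integral_cmult) measurable
    also have "\<dots> \<le> ennreal (R x) * (ennreal C * (\<integral>\<^sup>+y. ennreal (std_normal_density y * W x y) \<partial>lborel))"
      unfolding W_def C_def by (intro mult_left_mono Inner[OF fin bt smallJ B]) auto
    also have "\<dots> = ennreal C * (\<integral>\<^sup>+y. ennreal (R x) * ennreal (std_normal_density y * W x y) \<partial>lborel)"
      unfolding W_def by (subst nn_integral_cmult) (auto simp: ac_simps)
    also have "\<dots> = (\<integral>\<^sup>+y. ennreal C * ennreal (beta_dens n \<beta> (x(0:=y))) \<partial>lborel)"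
    proof -
      have e1: "(\<integral>\<^sup>+y. ennreal (R x) * ennreal (std_normal_density y * W x y) \<partial>lborel) = (\<integral>\<^sup>+y. ennreal (beta_dens n \<beta> (x(0:=y))) \<partial>lborel)"
      proof (intro nn_integral_cong)
        fix y
        show "ennreal (R x) * ennreal (std_normal_density y * W x y) = ennreal (beta_dens n \<beta> (x(0:=y)))"
          unfolding Dsplit by (rule ennreal_mult[symmetric]) (use Rn[of x] Wn[of x y] in auto)
      qed
      have e2: "ennreal C * (\<integral>\<^sup>+y. ennreal (beta_dens n \<beta> (x(0:=y))) \<partial>lborel) = (\<integral>\<^sup>+y. ennreal C * ennreal (beta_dens n \<beta> (x(0:=y))) \<partial>lborel)"
      proof (rule nn_integral_cmult[symmetric])
        have m1: "(\<lambda>y. x(0:=y)) \<in> measurable lborel (Pi\<^sub>M (insert 0 {1..<n}) (\<lambda>_. lborel))"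
          by (rule measurable_component_update[OF hx nin])
        show "(\<lambda>y. ennreal (beta_dens n \<beta> (x(0:=y)))) \<in> borel_measurable lborel"
          using measurable_compose[OF m1 mD] by measurable
      qed
      show ?thesis unfolding e1 by (rule e2)
    qed
    finally show ?thesis .
  qed
  have "(\<integral>\<^sup>+l. ennreal (\<bar>ln \<bar>u - l 0 / B\<bar>\<bar> * beta_dens n \<beta> l) \<partial>gauss_space n)
      = (\<integral>\<^sup>+x. (\<integral>\<^sup>+y. ennreal (\<bar>ln \<bar>u - (x(0:=y)) 0 / B\<bar>\<bar> * beta_dens n \<beta> (x(0:=y))) \<partial>lborel) \<partial>Pi\<^sub>M {1..<n} (\<lambda>_. lborel))"
    unfolding gauss_space_def U by (rule product_nn_integral_insert[OF fin nin]) measurable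
  also have "\<dots> \<le> (\<integral>\<^sup>+x. (\<integral>\<^sup>+y. ennreal C * ennreal (beta_dens n \<beta> (x(0:=y))) \<partial>lborel) \<partial>Pi\<^sub>M {1..<n} (\<lambda>_. lborel))"
    by (intro nn_integral_mono inner)
  also have "\<dots> = (\<integral>\<^sup>+l. ennreal C * ennreal (beta_dens n \<beta> l) \<partial>gauss_space n)"
    unfolding gauss_space_def U by (rule product_nn_integral_insert[OF fin nin, symmetric]) measurable
  also have "\<dots> = ennreal C * beta_Z n \<beta>"
    unfolding beta_Z_def gauss_space_def U by (rule nn_integral_cmult) measurable
  finally have "(\<integral>\<^sup>+l. ennreal (\<bar>ln \<bar>u - l 0 / B\<bar>\<bar> * beta_dens n \<beta> l) \<partial>gauss_space n) \<le> ennreal C * beta_Z n \<beta>" .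
  then show ?thesis unfolding beta_expect_def C_def[symmetric] by (rule div_le_aux)
qed

lemma lnu_bound:
  fixes d q x :: real
  assumes d: "0 < d" and q: "1 \<le> q"
  shows "ln (1 + \<bar>1 + x / (d * q)\<bar>) \<le> ln (2 + \<bar>x\<bar>) + ln 2 + \<bar>ln d\<bar>"
proof -
  have "\<bar>x / (d * q)\<bar> = \<bar>x\<bar> / (d * q)" using d q by (simp add: abs_mult)
  also have "\<dots> \<le> \<bar>x\<bar> / d"
  proof -
    have "d * 1 \<le> d * q" using d q by (intro mult_left_mono) auto
    then show ?thesis using d q by (intro divide_left_mono) auto
  qed
  finally have h1: "\<bar>x / (d * q)\<bar> \<le> \<bar>x\<bar> / d" .
  have h2: "1 + \<bar>1 + x / (d * q)\<bar> \<le> 2 + \<bar>x\<bar> / d"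
    using h1 abs_triangle_ineq[of 1 "x / (d * q)"] by simp
  have h3: "2 + \<bar>x\<bar> / d \<le> (2 + \<bar>x\<bar>) * (1 + 1 / d)"
    using d by (simp add: algebra_simps)
  have h4: "1 + 1 / d \<le> 2 * exp \<bar>ln d\<bar>"
  proof -
    have "1 / d = exp (- ln d)" using d by (simp add: exp_minus divide_inverse)
    also have "\<dots> \<le> exp \<bar>ln d\<bar>" by simp
    finally have f1: "1 / d \<le> exp \<bar>ln d\<bar>" .
    have f2: "1 \<le> exp \<bar>ln d\<bar>" by simp
    from f1 f2 show ?thesis by linarith
  qed
  have pos: "0 < 1 + \<bar>1 + x / (d * q)\<bar>" by (simp add: add_pos_nonneg)
  have "1 + \<bar>1 + x / (d * q)\<bar> \<le> (2 + \<bar>x\<bar>) * (2 * exp \<bar>ln d\<bar>)"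
  proof -
    have "(2 + \<bar>x\<bar>) * (1 + 1 / d) \<le> (2 + \<bar>x\<bar>) * (2 * exp \<bar>ln d\<bar>)"
      using h4 by (intro mult_left_mono) auto
    then show ?thesis using h2 h3 by linarith
  qed
  then have "ln (1 + \<bar>1 + x / (d * q)\<bar>) \<le> ln ((2 + \<bar>x\<bar>) * (2 * exp \<bar>ln d\<bar>))"
    using pos by (subst ln_le_cancel_iff) (auto intro: add_pos_nonneg)
  also have "\<dots> = ln (2 + \<bar>x\<bar>) + ln 2 + \<bar>ln d\<bar>"
  proof -
    have "2 + \<bar>x\<bar> > 0" by (simp add: add_pos_nonneg)
    then show ?thesis by (simp add: ln_mult)
  qed
  finally show ?thesis .
qed

lemma b_form:
  fixes L N :: real
  assumes L: "2 \<le> L"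
  shows "sqrt (2 * L) - N / (2 * sqrt (2 * L)) = sqrt (2 * L) * (1 - (N / L) / 4)"
proof -
  define s where "s = sqrt (2 * L)"
  have s2: "s^2 = 2 * L" unfolding s_def using L by simp
  have sp: "0 < s" unfolding s_def using L by simp
  have Lp: "L \<noteq> 0" using L by simp
  have "N / (2 * s) = s * ((N / L) / 4)"
  proof -
    have "N / (2 * s) = N * s / (2 * s^2)" using sp by (simp add: power2_eq_square field_simps)
    also have "\<dots> = N * s / (4 * L)" unfolding s2 by simp
    also have "\<dots> = s * ((N / L) / 4)" using Lp by (simp add: field_simps)
    finally show ?thesis .
  qed
  then show ?thesis unfolding s_def[symmetric] by (simp add: algebra_simps)
qed

theorem lemma3p4:
  fixes \<delta> \<beta> :: "nat \<Rightarrow> real" and x :: real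
  assumes \<delta>_pos: "\<And>n. \<delta> n > 0"
    and \<delta>_lim: "(\<lambda>n. ln (\<delta> n) / ln (real n)) \<longlonglongrightarrow> 0"
    and \<beta>_nonneg: "\<And>n. \<beta> n \<ge> 0"
    and \<beta>_lim: "(\<lambda>n. real n * ln (real n) * \<beta> n) \<longlonglongrightarrow> 0"
  defines "a \<equiv> (\<lambda>n. \<delta> n * sqrt (2 * ln (real n)))"
    and "b \<equiv> (\<lambda>n. sqrt (2 * ln (real n)) -
            (ln (ln (real n)) + 2 * ln (\<delta> n) + ln (4 * pi)) / (2 * sqrt (2 * ln (real n))))"
  shows "(\<lambda>n. ennreal (real n * \<beta> n) *
            beta_expect n (\<beta> n) (\<lambda>l. \<bar>ln \<bar>1 + x / (a n * b n) - l 0 / b n\<bar>\<bar>))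
         \<longlonglongrightarrow> 0"
proof -
  define L where "L n = ln (real n)" for n
  define r where "r n = (ln (ln (real n)) + 2 * ln (\<delta> n) + ln (4 * pi)) / ln (real n)" for n
  define K0 where "K0 = ln (2 + \<bar>x\<bar>) + ln 2 + 1"
  define F where "F n = 240 * (real n * L n * \<beta> n) + 8 * K0 * (real n * \<beta> n) + 8 * (real n * L n * \<beta> n) * \<bar>ln (\<delta> n) / L n\<bar>" for n
  have r0: "r \<longlonglongrightarrow> 0"
  proof -
    have l1: "(\<lambda>n. ln (ln (real n)) / ln (real n)) \<longlonglongrightarrow> 0" by real_asymp
    have l2: "(\<lambda>n. 1 / ln (real n)) \<longlonglongrightarrow> 0" by real_asymp
    have "(\<lambda>n. ln (ln (real n)) / ln (real n) + 2 * (ln (\<delta> n) / ln (real n)) + ln (4 * pi) * (1 / ln (real n))) \<longlonglongrightarrow> 0 + 2 * 0 + ln (4 * pi) * 0"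
      by (intro tendsto_add tendsto_mult tendsto_const l1 l2 \<delta>_lim)
    then show ?thesis unfolding r_def by (simp add: add_divide_distrib)
  qed
  have ev1: "eventually (\<lambda>n. 2 \<le> L n) sequentially" unfolding L_def by real_asymp
  have ev2: "eventually (\<lambda>n. \<bar>r n\<bar> < 1) sequentially"
    using tendstoD[OF r0, of 1] by (simp add: dist_real_def)
  have ev3: "eventually (\<lambda>n. real n * L n * \<beta> n < 1/80) sequentially"
    using order_tendstoD(2)[OF \<beta>_lim, of "1/80"] unfolding L_def by simp
  have nb0: "(\<lambda>n. real n * \<beta> n) \<longlonglongrightarrow> 0"
  proof (rule Lim_null_comparison)
    show "eventually (\<lambda>n. norm (real n * \<beta> n) \<le> real n * ln (real n) * \<beta> n) sequentially"
      using ev1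
    proof eventually_elim
      case (elim n)
      have p: "0 \<le> real n * \<beta> n" using \<beta>_nonneg[of n] by simp
      have "real n * \<beta> n * 1 \<le> real n * \<beta> n * ln (real n)"
        using elim p unfolding L_def by (intro mult_left_mono) auto
      then show ?case using p by (simp add: ac_simps)
    qed
    show "(\<lambda>n. real n * ln (real n) * \<beta> n) \<longlonglongrightarrow> 0" by (rule \<beta>_lim)
  qed
  have F0: "F \<longlonglongrightarrow> 0"
  proof -
    have bl: "(\<lambda>n. real n * L n * \<beta> n) \<longlonglongrightarrow> 0" unfolding L_def by (rule \<beta>_lim)
    have dl: "(\<lambda>n. \<bar>ln (\<delta> n) / L n\<bar>) \<longlonglongrightarrow> 0" unfolding L_def using tendsto_rabs_zero[OF \<delta>_lim] .
    have "F \<longlonglongrightarrow> 240 * 0 + 8 * K0 * 0 + 8 * 0 * 0"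
      unfolding F_def by (intro tendsto_add tendsto_mult tendsto_const bl dl nb0)
    then show ?thesis by simp
  qed
  have evB: "eventually (\<lambda>n. ennreal (real n * \<beta> n) *
            beta_expect n (\<beta> n) (\<lambda>l. \<bar>ln \<bar>1 + x / (a n * b n) - l 0 / b n\<bar>\<bar>) \<le> ennreal (F n)) sequentially"
    using ev1 ev2 ev3
  proof eventually_elim
    case (elim n)
    note L2 = elim(1) and r1 = elim(2) and nb = elim(3)
    have bt: "0 \<le> \<beta> n" by (rule \<beta>_nonneg)
    have n1: "1 \<le> n"
    proof (rule ccontr)
      assume "\<not> 1 \<le> n" then have "n = 0" by simp
      then show False using L2 unfolding L_def by simp
    qed
    define s where "s = sqrt (2 * L n)"
    have s2: "2 \<le> s"
    proof -
      have "sqrt 4 \<le> sqrt (2 * L n)" using L2 by (intro real_sqrt_le_mono) simp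
      then show ?thesis unfolding s_def by simp
    qed
    have sL: "s \<le> L n"
    proof -
      have "2 * L n \<le> (L n)^2" using L2 by (simp add: power2_eq_square mult_right_mono)
      then have "sqrt (2 * L n) \<le> sqrt ((L n)^2)" by (rule real_sqrt_le_mono)
      then show ?thesis unfolding s_def using L2 by simp
    qed
    have bn: "b n = s * (1 - r n / 4)"
      unfolding b_def s_def r_def using b_form[OF L2[unfolded L_def]] L_def by simp
    have b1: "1 \<le> b n"
    proof -
      have "s * 3 \<le> s * (4 * (1 - r n / 4))" using s2 r1 by (intro mult_left_mono) auto
      moreover have "s * (4 * (1 - r n / 4)) = 4 * b n" unfolding bn by (simp add: algebra_simps)
      ultimately have "s * 3 \<le> 4 * b n" by simp
      then show ?thesis using s2 by simp
    qed
    have b3: "b n \<le> 3 * L n"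
    proof -
      have "s * (1 - r n / 4) \<le> s * 2" using s2 r1 by (intro mult_left_mono) auto
      then show ?thesis unfolding bn using sL L2 by linarith
    qed
    have nbn: "0 \<le> real n * \<beta> n" using bt by simp
    have nbL: "real n * \<beta> n * 2 \<le> real n * L n * \<beta> n"
    proof -
      have "real n * \<beta> n * 2 \<le> real n * \<beta> n * L n" using L2 nbn by (intro mult_left_mono) auto
      then show ?thesis by (simp add: ac_simps)
    qed
    have small: "40 * \<beta> n * real (n - 1) \<le> 1/2"
    proof -
      have "\<beta> n * real (n - 1) \<le> \<beta> n * real n" using bt by (intro mult_left_mono) auto
      then show ?thesis using nbL nb by (simp add: ac_simps)
    qed
    define u where "u = 1 + x / (a n * b n)"
    have ab: "a n * b n = \<delta> n * (s * b n)" unfolding a_def s_def L_def by simp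
    have q1: "1 \<le> s * b n"
    proof -
      have "1 * 1 \<le> s * b n" using s2 b1 by (intro mult_mono) auto
      then show ?thesis by simp
    qed
    have lu: "ln (1 + \<bar>u\<bar>) \<le> ln (2 + \<bar>x\<bar>) + ln 2 + \<bar>ln (\<delta> n)\<bar>"
      unfolding u_def ab by (rule lnu_bound[OF \<delta>_pos q1])
    define C where "C = 2 * (40 * sqrt (b n) + 4 * ln (1 + \<bar>u\<bar>) + 4)"
    have E: "beta_expect n (\<beta> n) (\<lambda>l. \<bar>ln \<bar>1 + x / (a n * b n) - l 0 / b n\<bar>\<bar>) \<le> ennreal C"
      unfolding C_def u_def by (rule Outer[OF n1 bt small b1])
    have sb: "sqrt (b n) \<le> b n" using b1 by (rule sqrt_le_self')
    have C1: "C \<le> 240 * L n + 8 * K0 + 8 * \<bar>ln (\<delta> n)\<bar>"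
    proof -
      have t1: "2 * (40 * sqrt (b n)) \<le> 240 * L n" using sb b3 by linarith
      have t2: "2 * (4 * ln (1 + \<bar>u\<bar>)) \<le> 8 * (ln (2 + \<bar>x\<bar>) + ln 2) + 8 * \<bar>ln (\<delta> n)\<bar>"
        using mult_left_mono[OF lu, of 8] by (simp add: algebra_simps)
      show ?thesis unfolding C_def K0_def using t1 t2 by (simp add: algebra_simps)
    qed
    have Lp: "0 < L n" using L2 by simp
    have "real n * \<beta> n * C \<le> real n * \<beta> n * (240 * L n + 8 * K0 + 8 * \<bar>ln (\<delta> n)\<bar>)"
      using C1 nbn by (rule mult_left_mono)
    also have "\<dots> = F n"
    proof -
      have e1: "\<bar>ln (\<delta> n) / L n\<bar> = \<bar>ln (\<delta> n)\<bar> / L n" using Lp by (simp add: abs_divide)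
      have e2: "real n * L n * \<beta> n * (\<bar>ln (\<delta> n)\<bar> / L n) = real n * \<beta> n * \<bar>ln (\<delta> n)\<bar>"
        using Lp by (simp add: field_simps)
      have "F n = 240 * (real n * L n * \<beta> n) + 8 * K0 * (real n * \<beta> n) + 8 * (real n * \<beta> n * \<bar>ln (\<delta> n)\<bar>)"
        unfolding F_def e1 mult.assoc[of 8 "real n * L n * \<beta> n"] e2 by (rule refl)
      then show ?thesis by (simp add: algebra_simps)
    qed
    finally have FC: "real n * \<beta> n * C \<le> F n" .
    have C0: "0 \<le> C" unfolding C_def using b1 by simp
    have "ennreal (real n * \<beta> n) * beta_expect n (\<beta> n) (\<lambda>l. \<bar>ln \<bar>1 + x / (a n * b n) - l 0 / b n\<bar>\<bar>)
        \<le> ennreal (real n * \<beta> n) * ennreal C" using E by (rule mult_left_mono) simp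
    also have "\<dots> = ennreal (real n * \<beta> n * C)" using nbn C0 by (rule ennreal_mult[symmetric])
    also have "\<dots> \<le> ennreal (F n)" using FC by (rule ennreal_leI)
    finally show ?case .
  qed
  have Fe: "(\<lambda>n. ennreal (F n)) \<longlonglongrightarrow> 0"
    using tendsto_ennrealI[OF F0] by simp
  show ?thesis
    by (rule tendsto_sandwich[OF _ evB tendsto_const Fe]) simp
qed

end
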